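(* Consider EPISODE (described in the context) applied to $f=\frac1N\sum_{i=1}^N f_i$, and suppose: each $f_i$ is twice differentiable with $\|\nabla^2 f_i(x)\|\le L_0+L_1\|\nabla f_i(x)\|$ for all $x$; for all $x$, $\mathbb{E}[\nabla F_i(x;\xi_i)]=\nabla f_i(x)$ and $\|\nabla F_i(x;\xi_i)-\nabla f_i(x)\|\le\sigma$ almost surely ($\xi_i\sim\mathcal{D}_i$); and $\|\nabla f_i(x)\|\le\kappa+\rho\|\nabla f(x)\|$ for all $x,i$, with $\kappa\ge0$, $\rho\ge1$. Fix $C\ge1$ and let $A=1+e^C-\frac{e^C-1}{C}$, $B=\frac{e^C-1}{C}$. Suppose $$2\eta I\big(AL_0+BL_1\kappa+BL_1\rho(\sigma+\gamma/\eta)\big)\le1\quad\text{and}\quad\max\Big\{2\eta I\big(2\sigma+\gamma/\eta\big),\ \gamma I\Big\}\le\frac{C}{L_1}.$$ Then for any round $r$, any $i\in[N]$, and all $x\in\mathbb{R}^d$ with $\|x-\bar{x}_r\|\le 2\eta I(2\sigma+\gamma/\eta)$, almost surely $$\mathbb{1}_{\mathcal{A}_r}\|\nabla^2 f_i(x)\|\le L_0+L_1\big(\kappa+(\rho+1)(\gamma/\eta+2\sigma)\big).$$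
   Context: Here $f_i(x)=\mathbb{E}_{\xi_i\sim\mathcal{D}_i}[F_i(x;\xi_i)]$ and $\|\cdot\|$ is the Euclidean norm (operator norm for matrices). EPISODE with $N$ clients, communication interval $I\ge1$, step size $\eta>0$, clipping parameter $\gamma>0$: let $t_r=rI$ and $\mathcal{I}_r=\{t_r,\dots,t_{r+1}-1\}$; $\bar{x}_0=x_0$. At the start of round $r$, every client sets $x^i_{t_r}=\bar{x}_r$; each client draws a fresh $\tilde\xi^i_r\sim\mathcal{D}_i$, sets $G^i_r=\nabla F_i(\bar{x}_r;\tilde\xi^i_r)$, and $G_r=\frac1N\sum_i G^i_r$. The event $\mathcal{A}_r=\{\|G_r\|\le\gamma/\eta\}$ and $\bar{\mathcal{A}}_r$ is its complement. For $t\in\mathcal{I}_r$, client $i$ draws fresh $\xi^i_t\sim\mathcal{D}_i$, sets $g^i_t=\nabla F_i(x^i_t;\xi^i_t)-G^i_r+G_r$, and updates $x^i_{t+1}=x^i_t-\eta g^i_t$ on $\mathcal{A}_r$, and $x^i_{t+1}=x^i_t-\gamma g^i_t/\|g^i_t\|$ on $\bar{\mathcal{A}}_r$. Then $\bar{x}_{r+1}=\frac1N\sum_i x^i_{t_{r+1}}$. All samples are independent. $\mathbb{1}_E$ denotes the indicator of event $E$. *)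

theory Defs
  imports "HOL-Probability.Probability"
begin

text \<open>Parameters: N clients, interval I, step size eta, clipping gamma,
  stochastic gradient oracle GF i x s (= nabla F_i(x; s)), initial point x0,
  resampled samples xt i r (= tilde xi^i_r) and local samples xs i t (= xi^i_t).\<close>

definition Gavg :: "nat \<Rightarrow> (nat \<Rightarrow> 'v::euclidean_space \<Rightarrow> 's \<Rightarrow> 'v) \<Rightarrow> (nat \<Rightarrow> nat \<Rightarrow> 's) \<Rightarrow> nat \<Rightarrow> 'v \<Rightarrow> 'v"
  where "Gavg N GF xt r xb = (1 / real N) *\<^sub>R (\<Sum>i<N. GF i xb (xt i r))"

text \<open>local iterate x^i_{t_r + k} of client i in round r started from xb = bar x_r\<close>
primrec local_iter :: "nat \<Rightarrow> nat \<Rightarrow> real \<Rightarrow> real \<Rightarrow> (nat \<Rightarrow> 'v::euclidean_space \<Rightarrow> 's \<Rightarrow> 'v)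
    \<Rightarrow> (nat \<Rightarrow> nat \<Rightarrow> 's) \<Rightarrow> (nat \<Rightarrow> nat \<Rightarrow> 's) \<Rightarrow> nat \<Rightarrow> nat \<Rightarrow> 'v \<Rightarrow> nat \<Rightarrow> 'v" where
  "local_iter N I \<eta> \<gamma> GF xt xs r i xb 0 = xb"
| "local_iter N I \<eta> \<gamma> GF xt xs r i xb (Suc k) =
     (let x = local_iter N I \<eta> \<gamma> GF xt xs r i xb k;
          G = Gavg N GF xt r xb;
          g = GF i x (xs i (r * I + k)) - GF i xb (xt i r) + G
      in if norm G \<le> \<gamma> / \<eta> then x - \<eta> *\<^sub>R g else x - (\<gamma> / norm g) *\<^sub>R g)"

primrec xbar :: "nat \<Rightarrow> nat \<Rightarrow> real \<Rightarrow> real \<Rightarrow> (nat \<Rightarrow> 'v::euclidean_space \<Rightarrow> 's \<Rightarrow> 'v) \<Rightarrow> 'v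
    \<Rightarrow> (nat \<Rightarrow> nat \<Rightarrow> 's) \<Rightarrow> (nat \<Rightarrow> nat \<Rightarrow> 's) \<Rightarrow> nat \<Rightarrow> 'v" where
  "xbar N I \<eta> \<gamma> GF x0 xt xs 0 = x0"
| "xbar N I \<eta> \<gamma> GF x0 xt xs (Suc r) =
     (1 / real N) *\<^sub>R (\<Sum>i<N. local_iter N I \<eta> \<gamma> GF xt xs r i (xbar N I \<eta> \<gamma> GF x0 xt xs r) I)"

definition event_A :: "'a measure \<Rightarrow> nat \<Rightarrow> nat \<Rightarrow> real \<Rightarrow> real \<Rightarrow> (nat \<Rightarrow> 'v::euclidean_space \<Rightarrow> 's \<Rightarrow> 'v) \<Rightarrow> 'v
    \<Rightarrow> (nat \<Rightarrow> nat \<Rightarrow> 'a \<Rightarrow> 's) \<Rightarrow> (nat \<Rightarrow> nat \<Rightarrow> 'a \<Rightarrow> 's) \<Rightarrow> nat \<Rightarrow> 'a set" where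
  "event_A M N I \<eta> \<gamma> GF x0 \<xi>t \<xi> r =
     {\<omega> \<in> space M. norm (Gavg N GF (\<lambda>i r. \<xi>t i r \<omega>) r
        (xbar N I \<eta> \<gamma> GF x0 (\<lambda>i r. \<xi>t i r \<omega>) (\<lambda>i t. \<xi> i t \<omega>) r)) \<le> \<gamma> / \<eta>}"

text \<open>client index of a sample label: Inl (i,r) = tilde xi^i_r, Inr (i,t) = xi^i_t\<close>
fun sample_client :: "(nat \<times> nat) + (nat \<times> nat) \<Rightarrow> nat" where
  "sample_client (Inl (i, _)) = i"
| "sample_client (Inr (i, _)) = i"

fun sample_var :: "(nat \<Rightarrow> nat \<Rightarrow> 'a \<Rightarrow> 's) \<Rightarrow> (nat \<Rightarrow> nat \<Rightarrow> 'a \<Rightarrow> 's) \<Rightarrow> (nat \<times> nat) + (nat \<times> nat) \<Rightarrow> 'a \<Rightarrow> 's" where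
  "sample_var \<xi>t \<xi> (Inl (i, r)) = \<xi>t i r"
| "sample_var \<xi>t \<xi> (Inr (i, t)) = \<xi> i t"

end

theory Submission
  imports Defs
begin


lemma gronwall_norm:
  fixes h h' :: "real \<Rightarrow> 'v::real_inner"
  assumes hd: "\<And>t. (h has_vector_derivative h' t) (at t)"
    and bd: "\<And>t. 0 \<le> t \<Longrightarrow> t \<le> 1 \<Longrightarrow> norm (h' t) \<le> k * (norm (h t) + c)"
    and k: "k \<ge> 0" and c: "c \<ge> 0"
  shows "norm (h 1) \<le> (norm (h 0) + c) * exp k - c"
proof (rule field_le_epsilon)
  fix e :: real assume e: "e > 0"
  define \<delta> where "\<delta> = e / exp k"
  have \<delta>: "\<delta> > 0" using e by (simp add: \<delta>_def)
  define z where "z t = sqrt (h t \<bullet> h t + \<delta>^2)" for t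
  have hh: "h t \<bullet> h t = (norm (h t))^2" for t by (simp add: power2_norm_eq_inner)
  have zpos: "z t > 0" for t unfolding z_def hh using \<delta>
    by (intro real_sqrt_gt_zero) (simp add: add_nonneg_pos)
  have zge: "norm (h t) \<le> z t" for t unfolding z_def hh
    by (rule real_le_rsqrt) simp
  have z0: "z 0 \<le> norm (h 0) + \<delta>" unfolding z_def hh
    using \<delta> by (intro real_le_lsqrt) (auto simp: power2_sum)
  have dinner: "((\<lambda>t. h t \<bullet> h t) has_real_derivative 2 * (h t \<bullet> h' t)) (at t)" for t
  proof -
    have "((\<lambda>t. h t \<bullet> h t) has_derivative (\<lambda>s. h t \<bullet> (s *\<^sub>R h' t) + (s *\<^sub>R h' t) \<bullet> h t)) (at t)"
      using hd[of t] unfolding has_vector_derivative_def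
      by (intro has_derivative_inner) auto
    then show ?thesis unfolding has_field_derivative_def
      by (rule has_derivative_eq_rhs) (auto simp: fun_eq_iff inner_commute algebra_simps)
  qed
  have dz: "(z has_real_derivative (h t \<bullet> h' t) / z t) (at t)" for t
  proof -
    have "((\<lambda>t. h t \<bullet> h t + \<delta>^2) has_real_derivative 2 * (h t \<bullet> h' t)) (at t)"
      using dinner[of t] by (auto intro!: derivative_eq_intros)
    from DERIV_chain2[OF DERIV_real_sqrt[of "h t \<bullet> h t + \<delta>^2"] this]
    show ?thesis using zpos[of t] unfolding z_def hh
      by (simp add: divide_simps add_nonneg_pos \<delta>)
  qed
  have dphi: "((\<lambda>t. exp (-k*t) * (z t + c)) has_real_derivative
      exp (-k*t) * ((h t \<bullet> h' t) / z t) + (- k * exp (-k*t)) * (z t + c)) (at t)" for t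
    by (rule derivative_eq_intros dz refl | simp)+
  have "exp (-k*1) * (z 1 + c) \<le> exp (-k*0) * (z 0 + c)"
  proof (rule DERIV_nonpos_imp_nonincreasing[where f = "\<lambda>t. exp (-k*t) * (z t + c)"])
    fix t :: real assume t: "0 \<le> t" "t \<le> 1"
    have "h t \<bullet> h' t \<le> norm (h t) * norm (h' t)" by (rule norm_cauchy_schwarz)
    also have "\<dots> \<le> z t * norm (h' t)" by (intro mult_right_mono zge) auto
    finally have "(h t \<bullet> h' t) / z t \<le> norm (h' t)" using zpos[of t] by (simp add: divide_simps mult.commute)
    also have "\<dots> \<le> k * (z t + c)" using bd[OF t] zge[of t] k
      by (meson add_right_mono mult_left_mono order_trans)
    finally have "exp (-k*t) * ((h t \<bullet> h' t) / z t) \<le> exp (-k*t) * (k * (z t + c))"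
      by (intro mult_left_mono) auto
    then have "exp (-k*t) * ((h t \<bullet> h' t) / z t) + (- k * exp (-k*t)) * (z t + c) \<le> 0"
      by (simp add: algebra_simps)
    then show "\<exists>y. ((\<lambda>t. exp (-k*t) * (z t + c)) has_real_derivative y) (at t) \<and> y \<le> 0"
      using dphi by blast
  qed simp
  then have "z 1 + c \<le> (z 0 + c) * exp k"
    by (simp add: exp_minus field_simps)
  also have "\<dots> \<le> (norm (h 0) + \<delta> + c) * exp k" using z0 by simp
  also have "\<dots> = (norm (h 0) + c) * exp k + e" by (simp add: \<delta>_def algebra_simps)
  finally show "norm (h 1) \<le> (norm (h 0) + c) * exp k - c + e" using zge[of 1] by simp
qed



lemma exp_chord:
  fixes k C :: real assumes "0 \<le> k" "k \<le> C" "C > 0"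
  shows "exp k - 1 \<le> k * ((exp C - 1) / C)"
proof -
  have "exp ((1 - k/C) *\<^sub>R 0 + (k/C) *\<^sub>R C) \<le> (1 - k/C) * exp 0 + (k/C) * exp C"
    using assms by (intro convex_onD[OF exp_convex]) auto
  then have "C * (k + C * exp k) \<le> C * (C + k * exp C)" using assms by (simp add: field_simps)
  then have "k + C * exp k \<le> C + k * exp C" using assms(3) by simp
  then show ?thesis using assms by (simp add: field_simps)
qed

lemma AgeB:
  fixes C :: real assumes C: "C \<ge> 1"
  shows "(exp C - 1) / C \<le> 1 + exp C - (exp C - 1) / C"
proof -
  have "(\<lambda>x. x * (1 + exp x) - 2 * (exp x - 1)) 1 \<le> (\<lambda>x. x * (1 + exp x) - 2 * (exp x - 1)) C"
  proof (rule DERIV_nonneg_imp_nondecreasing[OF C])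
    fix x :: real assume x: "1 \<le> x" "x \<le> C"
    have "((\<lambda>x. x * (1 + exp x) - 2 * (exp x - 1)) has_real_derivative
       1 * (1 + exp x) + x * exp x - 2 * exp x) (at x)"
      by (rule derivative_eq_intros refl | simp)+
    moreover have "1 * (1 + exp x) + x * exp x - 2 * exp x \<ge> 0"
    proof -
      have "exp x \<le> x * exp x" using x by simp
      moreover have "1 * (1 + exp x) + x * exp x - 2 * exp x = 1 + (x * exp x - exp x)" by simp
      ultimately show ?thesis by linarith
    qed
    ultimately show "\<exists>y. ((\<lambda>x. x * (1 + exp x) - 2 * (exp x - 1)) has_real_derivative y) (at x) \<and> 0 \<le> y"
      by blast
  qed
  moreover have "exp (1::real) < 3" using e_less_272 by simp
  ultimately have "2 * (exp C - 1) \<le> C * (1 + exp C)" by simp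
  then have "(exp C - 1) / C \<le> (1 + exp C) / 2" using C by (simp add: divide_simps mult.commute)
  moreover have "\<And>b e::real. b \<le> (1 + e) / 2 \<Longrightarrow> b \<le> 1 + e - b" by (auto simp: field_simps)
  ultimately show ?thesis by blast
qed



lemma Gavg_cong: "(\<And>i. i<N \<Longrightarrow> xt i r = xt' i r) \<Longrightarrow> Gavg N GF xt r xb = Gavg N GF xt' r xb"
  unfolding Gavg_def by simp

lemma local_iter_cong:
  assumes "\<And>i'. i' < N \<Longrightarrow> xt i' r = xt' i' r" "i < N"
    "\<And>k'. k' < k \<Longrightarrow> xs i (r*I+k') = xs' i (r*I+k')"
  shows "local_iter N I \<eta> \<gamma> GF xt xs r i xb k = local_iter N I \<eta> \<gamma> GF xt' xs' r i xb k"
  using assms(3)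
proof (induction k)
  case 0 then show ?case by simp
next
  case (Suc k)
  have G: "Gavg N GF xt r xb = Gavg N GF xt' r xb" by (rule Gavg_cong) (use assms(1) in auto)
  have IH: "local_iter N I \<eta> \<gamma> GF xt xs r i xb k = local_iter N I \<eta> \<gamma> GF xt' xs' r i xb k"
    using Suc by auto
  have "xt i r = xt' i r" using assms(1,2) by auto
  then show ?case using IH Suc.prems[of k] G
    by (simp add: Let_def)
qed

lemma xbar_cong:
  assumes "\<And>i r'. i < N \<Longrightarrow> r' < r \<Longrightarrow> xt i r' = xt' i r'"
    "\<And>i t. i < N \<Longrightarrow> t < r * I \<Longrightarrow> xs i t = xs' i t"
  shows "xbar N I \<eta> \<gamma> GF x0 xt xs r = xbar N I \<eta> \<gamma> GF x0 xt' xs' r"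
  using assms
proof (induction r)
  case 0 then show ?case by simp
next
  case (Suc r)
  have IH: "xbar N I \<eta> \<gamma> GF x0 xt xs r = xbar N I \<eta> \<gamma> GF x0 xt' xs' r"
    using Suc.prems by (intro Suc.IH) (auto intro: order_less_le_trans)
  show ?case unfolding xbar.simps IH
    by (intro arg_cong[where f="\<lambda>x. _ *\<^sub>R x"] sum.cong refl local_iter_cong)
       (auto intro!: Suc.prems)
qed

lemma meas_GF:
  assumes "(\<lambda>(x, s). F x s) \<in> borel_measurable (borel \<Otimes>\<^sub>M Di)"
    "X \<in> borel_measurable \<Omega>" "S \<in> \<Omega> \<rightarrow>\<^sub>M Di"
  shows "(\<lambda>\<omega>. F (X \<omega>) (S \<omega>)) \<in> borel_measurable \<Omega>"
  using measurable_compose[OF measurable_Pair[OF assms(2,3)] assms(1)] by simp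

lemma meas_local:
  fixes GF :: "nat \<Rightarrow> 'v::euclidean_space \<Rightarrow> 's \<Rightarrow> 'v"
  assumes GFm: "\<And>i. i<N \<Longrightarrow> (\<lambda>(x, s). GF i x s) \<in> borel_measurable (borel \<Otimes>\<^sub>M D i)"
    and xtm: "\<And>i'. i' < N \<Longrightarrow> (\<lambda>\<omega>. xt i' r \<omega>) \<in> \<Omega> \<rightarrow>\<^sub>M D i'" and i: "i < N"
    and xsm: "\<And>k'. k' < k \<Longrightarrow> (\<lambda>\<omega>. xs i (r*I+k') \<omega>) \<in> \<Omega> \<rightarrow>\<^sub>M D i"
    and Xb: "Xb \<in> borel_measurable \<Omega>"
  shows "(\<lambda>\<omega>. local_iter N I \<eta> \<gamma> GF (\<lambda>i r. xt i r \<omega>) (\<lambda>i t. xs i t \<omega>) r i (Xb \<omega>) k) \<in> borel_measurable \<Omega>"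
  using xsm
proof (induction k)
  case 0 then show ?case using Xb by simp
next
  case (Suc k)
  have x[measurable]: "(\<lambda>\<omega>. local_iter N I \<eta> \<gamma> GF (\<lambda>i r. xt i r \<omega>) (\<lambda>i t. xs i t \<omega>) r i (Xb \<omega>) k) \<in> borel_measurable \<Omega>"
    using Suc by auto
  have G[measurable]: "(\<lambda>\<omega>. Gavg N GF (\<lambda>i r. xt i r \<omega>) r (Xb \<omega>)) \<in> borel_measurable \<Omega>"
  proof -
    have "\<And>j. j < N \<Longrightarrow> (\<lambda>\<omega>. GF j (Xb \<omega>) (xt j r \<omega>)) \<in> borel_measurable \<Omega>"
      by (rule meas_GF[where F="GF j" for j, OF GFm Xb xtm]) auto
    then show ?thesis unfolding Gavg_def
      by (intro borel_measurable_scaleR borel_measurable_const borel_measurable_sum) auto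
  qed
  have g[measurable]: "(\<lambda>\<omega>. GF i (local_iter N I \<eta> \<gamma> GF (\<lambda>i r. xt i r \<omega>) (\<lambda>i t. xs i t \<omega>) r i (Xb \<omega>) k) (xs i (r * I + k) \<omega>)
      - GF i (Xb \<omega>) (xt i r \<omega>) + Gavg N GF (\<lambda>i r. xt i r \<omega>) r (Xb \<omega>)) \<in> borel_measurable \<Omega>"
    by (intro borel_measurable_add borel_measurable_diff meas_GF[where F="GF i", OF GFm[OF i]] x G Xb xtm[OF i] Suc.prems) auto
  show ?case
    by (simp add: Let_def) measurable
qed

lemma meas_xbar:
  fixes GF :: "nat \<Rightarrow> 'v::euclidean_space \<Rightarrow> 's \<Rightarrow> 'v"
  assumes GFm: "\<And>i. i<N \<Longrightarrow> (\<lambda>(x, s). GF i x s) \<in> borel_measurable (borel \<Otimes>\<^sub>M D i)"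
    and xtm: "\<And>i r'. i < N \<Longrightarrow> r' < r \<Longrightarrow> (\<lambda>\<omega>. xt i r' \<omega>) \<in> \<Omega> \<rightarrow>\<^sub>M D i"
    and xsm: "\<And>i t. i < N \<Longrightarrow> t < r * I \<Longrightarrow> (\<lambda>\<omega>. xs i t \<omega>) \<in> \<Omega> \<rightarrow>\<^sub>M D i"
  shows "(\<lambda>\<omega>. xbar N I \<eta> \<gamma> GF x0 (\<lambda>i r. xt i r \<omega>) (\<lambda>i t. xs i t \<omega>) r) \<in> borel_measurable \<Omega>"
  using xtm xsm
proof (induction r)
  case 0 then show ?case by simp
next
  case (Suc r)
  have IH: "(\<lambda>\<omega>. xbar N I \<eta> \<gamma> GF x0 (\<lambda>i r. xt i r \<omega>) (\<lambda>i t. xs i t \<omega>) r) \<in> borel_measurable \<Omega>"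
    using Suc.prems by (intro Suc.IH) (auto intro: order_less_le_trans)
  show ?case unfolding xbar.simps
    by (intro borel_measurable_scaleR borel_measurable_const borel_measurable_sum
        meas_local[where D=D, OF GFm _ _ _ IH] Suc.prems) auto
qed



lemma grad_growth:
  fixes g :: "'v::euclidean_space \<Rightarrow> 'v" and H :: "'v \<Rightarrow> 'v \<Rightarrow> 'v"
  assumes hess: "\<And>x. (g has_derivative H x) (at x)"
    and smooth: "\<And>x. onorm (H x) \<le> L0 + L1 * norm (g x)"
    and L0: "L0 \<ge> 0" and L1: "L1 > 0" and C: "C > 0"
    and d: "L1 * norm (x - y) \<le> C"
  shows "norm (g x) \<le> norm (g y) + (L0 + L1 * norm (g y)) * norm (x - y) * ((exp C - 1) / C)"
proof -
  define u where "u = x - y"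
  define p where "p t = y + t *\<^sub>R u" for t :: real
  define h where "h t = g (p t)" for t
  define h' where "h' t = H (p t) u" for t
  have hd: "(h has_vector_derivative h' t) (at t)" for t
  proof -
    have pd: "(p has_derivative (\<lambda>s. s *\<^sub>R u)) (at t)" unfolding p_def
      by (auto intro!: derivative_eq_intros)
    have "((g \<circ> p) has_derivative (H (p t) \<circ> (\<lambda>s. s *\<^sub>R u))) (at t)"
      by (rule diff_chain_at[OF pd hess])
    moreover have "bounded_linear (H (p t))" using hess has_derivative_bounded_linear by blast
    ultimately show ?thesis unfolding has_vector_derivative_def h_def h'_def
      by (simp add: o_def linear_cmul bounded_linear.linear)
  qed
  have bd: "norm (h' t) \<le> (L1 * norm u) * (norm (h t) + L0 / L1)" for t
  proof -
    have "bounded_linear (H (p t))" using hess has_derivative_bounded_linear by blast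
    then have "norm (h' t) \<le> onorm (H (p t)) * norm u" unfolding h'_def by (rule onorm)
    also have "\<dots> \<le> (L0 + L1 * norm (h t)) * norm u" unfolding h_def
      by (intro mult_right_mono smooth) auto
    also have "\<dots> = (L1 * norm u) * (norm (h t) + L0 / L1)" using L1 by (simp add: field_simps)
    finally show ?thesis .
  qed
  have "norm (h 1) \<le> (norm (h 0) + L0 / L1) * exp (L1 * norm u) - L0 / L1"
    by (rule gronwall_norm[OF hd bd]) (use L0 L1 in auto)
  also have "\<dots> = norm (h 0) + (norm (h 0) + L0 / L1) * (exp (L1 * norm u) - 1)"
    by (simp add: algebra_simps)
  also have "\<dots> \<le> norm (h 0) + (norm (h 0) + L0 / L1) * ((L1 * norm u) * ((exp C - 1) / C))"
    using L0 L1 d C unfolding u_def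
    by (intro add_left_mono mult_left_mono exp_chord) auto
  also have "\<dots> = norm (h 0) + (L0 + L1 * norm (h 0)) * norm u * ((exp C - 1) / C)"
    using L1 C by (simp add: field_simps)
  finally show ?thesis by (simp add: h_def p_def u_def)
qed


theorem lemma2:
  fixes M :: "'a measure"
    and D :: "nat \<Rightarrow> 's measure"
    and N I :: nat
    and \<eta> \<gamma> \<sigma> L0 L1 \<kappa> \<rho> C :: real
    and fi :: "nat \<Rightarrow> 'v::euclidean_space \<Rightarrow> real"
    and gi :: "nat \<Rightarrow> 'v \<Rightarrow> 'v"
    and Hi :: "nat \<Rightarrow> 'v \<Rightarrow> 'v \<Rightarrow> 'v"
    and GF :: "nat \<Rightarrow> 'v \<Rightarrow> 's \<Rightarrow> 'v"
    and x0 :: 'v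
    and \<xi>t \<xi> :: "nat \<Rightarrow> nat \<Rightarrow> 'a \<Rightarrow> 's"
  assumes M: "prob_space M"
    and N: "N \<ge> 1" and I: "I \<ge> 1" and eta: "\<eta> > 0" and gamma: "\<gamma> > 0"
    and L0: "L0 \<ge> 0" and L1: "L1 > 0" and sigma: "\<sigma> \<ge> 0"
    and kappa: "\<kappa> \<ge> 0" and rho: "\<rho> \<ge> 1" and C: "C \<ge> 1"
    \<comment> \<open>f_i twice differentiable with gradient gi i and Hessian Hi i, (L0,L1)-smooth\<close>
    and grad: "\<And>i x. i < N \<Longrightarrow> (fi i has_derivative (\<lambda>h. gi i x \<bullet> h)) (at x)"
    and hess: "\<And>i x. i < N \<Longrightarrow> (gi i has_derivative Hi i x) (at x)"
    and smooth: "\<And>i x. i < N \<Longrightarrow> onorm (Hi i x) \<le> L0 + L1 * norm (gi i x)"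
    \<comment> \<open>stochastic gradients: unbiased, bounded noise; jointly measurable\<close>
    and D: "\<And>i. i < N \<Longrightarrow> prob_space (D i)"
    and GF_meas: "\<And>i. i < N \<Longrightarrow> (\<lambda>(x, s). GF i x s) \<in> borel_measurable (borel \<Otimes>\<^sub>M D i)"
    and unbiased: "\<And>i x. i < N \<Longrightarrow> integrable (D i) (GF i x) \<and> (\<integral>s. GF i x s \<partial>D i) = gi i x"
    and noise: "\<And>i x. i < N \<Longrightarrow> (AE s in D i. norm (GF i x s - gi i x) \<le> \<sigma>)"
    \<comment> \<open>heterogeneity, with nabla f = (1/N) sum_i nabla f_i\<close>
    and hetero: "\<And>i x. i < N \<Longrightarrow>
        norm (gi i x) \<le> \<kappa> + \<rho> * norm ((1 / real N) *\<^sub>R (\<Sum>j<N. gi j x))"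
    \<comment> \<open>samples: all independent, each drawn from D i\<close>
    and indep: "prob_space.indep_vars M (\<lambda>k. D (sample_client k)) (sample_var \<xi>t \<xi>)
        {k. sample_client k < N}"
    and distr_t: "\<And>i r. i < N \<Longrightarrow> distr M (D i) (\<xi>t i r) = D i"
    and distr_s: "\<And>i t. i < N \<Longrightarrow> distr M (D i) (\<xi> i t) = D i"
    \<comment> \<open>step size conditions\<close>
    and cond1: "2 * \<eta> * real I * ((1 + exp C - (exp C - 1) / C) * L0 + ((exp C - 1) / C) * L1 * \<kappa>
        + ((exp C - 1) / C) * L1 * \<rho> * (\<sigma> + \<gamma> / \<eta>)) \<le> 1"
    and cond2: "max (2 * \<eta> * real I * (2 * \<sigma> + \<gamma> / \<eta>)) (\<gamma> * real I) \<le> C / L1"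
  shows "\<forall>r i. i < N \<longrightarrow>
    (AE \<omega> in M. \<forall>x. norm (x - xbar N I \<eta> \<gamma> GF x0 (\<lambda>i r. \<xi>t i r \<omega>) (\<lambda>i t. \<xi> i t \<omega>) r)
          \<le> 2 * \<eta> * real I * (2 * \<sigma> + \<gamma> / \<eta>) \<longrightarrow>
        indicator (event_A M N I \<eta> \<gamma> GF x0 \<xi>t \<xi> r) \<omega> * onorm (Hi i x)
          \<le> L0 + L1 * (\<kappa> + (\<rho> + 1) * (\<gamma> / \<eta> + 2 * \<sigma>)))"
proof (intro allI impI)
  fix r i assume i: "i < N"
  interpret prob_space M by (rule M)
  define X where "X \<omega> = xbar N I \<eta> \<gamma> GF x0 (\<lambda>i r. \<xi>t i r \<omega>) (\<lambda>i t. \<xi> i t \<omega>) r" for \<omega>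
  define M' where "M' k = D (sample_client k)" for k
  define J1 where "J1 = {Inl (i', r') | i' r'. i' < N \<and> r' < r} \<union> {Inr (i', t) | i' t. i' < N \<and> t < r * I}"
  have noise_j: "AE \<omega> in M. norm (GF j (X \<omega>) (\<xi>t j r \<omega>) - gi j (X \<omega>)) \<le> \<sigma>" if j: "j < N" for j
  proof -
    define J2 where "J2 = {Inl (j, r) :: (nat \<times> nat) + (nat \<times> nat)}"
    have ind: "indep_var (PiM J1 M') (\<lambda>\<omega>. restrict (\<lambda>k. sample_var \<xi>t \<xi> k \<omega>) J1)
        (PiM J2 M') (\<lambda>\<omega>. restrict (\<lambda>k. sample_var \<xi>t \<xi> k \<omega>) J2)"
      using indep unfolding M'_def
      by (intro indep_var_restrict) (auto simp: J1_def J2_def j)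
    define F where "F f = xbar N I \<eta> \<gamma> GF x0 (\<lambda>i r. f (Inl (i, r))) (\<lambda>i t. f (Inr (i, t))) r"
      for f :: "(nat \<times> nat) + (nat \<times> nat) \<Rightarrow> 's"
    have Fm: "F \<in> borel_measurable (PiM J1 M')"
      unfolding F_def
    proof (rule meas_xbar[where D=D and xt="\<lambda>i r f. f (Inl (i, r))" and xs="\<lambda>i t f. f (Inr (i, t))",
          simplified])
      show "\<And>i. i < N \<Longrightarrow> (\<lambda>(x, s). GF i x s) \<in> borel_measurable (borel \<Otimes>\<^sub>M D i)" by (rule GF_meas)
      show "(\<lambda>f. f (Inl (i', r'))) \<in> PiM J1 M' \<rightarrow>\<^sub>M D i'" if "i' < N" "r' < r" for i' r'
        using measurable_component_singleton[of "Inl (i', r')" J1 M'] that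
        by (simp add: J1_def M'_def)
      show "(\<lambda>f. f (Inr (i', t))) \<in> PiM J1 M' \<rightarrow>\<^sub>M D i'" if "i' < N" "t < r * I" for i' t
        using measurable_component_singleton[of "Inr (i', t)" J1 M'] that
        by (simp add: J1_def M'_def)
    qed
    have Gm: "(\<lambda>f. f (Inl (j, r))) \<in> PiM J2 M' \<rightarrow>\<^sub>M D j"
      using measurable_component_singleton[of "Inl (j, r)" J2 M'] by (simp add: J2_def M'_def)
    define R1 where "R1 \<omega> = restrict (\<lambda>k. sample_var \<xi>t \<xi> k \<omega>) J1" for \<omega>
    define R2 where "R2 \<omega> = restrict (\<lambda>k. sample_var \<xi>t \<xi> k \<omega>) J2" for \<omega>
    have e1: "F (R1 \<omega>) = X \<omega>" for \<omega>
      unfolding F_def X_def R1_def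
      by (rule xbar_cong) (auto simp: J1_def)
    have e2: "R2 \<omega> (Inl (j, r)) = \<xi>t j r \<omega>" for \<omega>
      by (auto simp: J2_def R2_def)
    from ind[folded R1_def R2_def] have rv1: "R1 \<in> M \<rightarrow>\<^sub>M PiM J1 M'" and rv2: "R2 \<in> M \<rightarrow>\<^sub>M PiM J2 M'"
      and eq: "distr M (PiM J1 M') R1 \<Otimes>\<^sub>M distr M (PiM J2 M') R2
          = distr M (PiM J1 M' \<Otimes>\<^sub>M PiM J2 M') (\<lambda>x. (R1 x, R2 x))"
      unfolding indep_var_distribution_eq by auto
    have rvY: "\<xi>t j r \<in> M \<rightarrow>\<^sub>M D j"
      using measurable_compose[OF rv2 Gm] e2 by (simp add: o_def)
    have gim[measurable]: "gi j \<in> borel_measurable borel"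
    proof (rule borel_measurable_continuous_onI)
      show "continuous_on UNIV (gi j)"
        using hess[OF j] has_derivative_continuous continuous_at_imp_continuous_on by blast
    qed
    have GFm[measurable]: "(\<lambda>z. GF j (fst z) (snd z)) \<in> borel_measurable (borel \<Otimes>\<^sub>M D j)"
      using GF_meas[OF j] by (simp add: case_prod_beta)
    have GFm1: "(\<lambda>s. GF j c s) \<in> borel_measurable (D j)" for c
      using measurable_compose[OF measurable_Pair[OF measurable_const[of c] measurable_ident] GFm]
      by simp
    note Fm[measurable] Gm[measurable]
    have Pm: "{z \<in> space (PiM J1 M' \<Otimes>\<^sub>M PiM J2 M').
        norm (GF j (F (fst z)) (snd z (Inl (j, r))) - gi j (F (fst z))) \<le> \<sigma>}
        \<in> sets (PiM J1 M' \<Otimes>\<^sub>M PiM J2 M')"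
    proof -
      have a: "(\<lambda>z. F (fst z)) \<in> borel_measurable (PiM J1 M' \<Otimes>\<^sub>M PiM J2 M')" by measurable
      have b: "(\<lambda>z. snd z (Inl (j, r))) \<in> (PiM J1 M' \<Otimes>\<^sub>M PiM J2 M') \<rightarrow>\<^sub>M D j"
        using measurable_compose[OF measurable_snd Gm] by (simp add: o_def)
      have c: "(\<lambda>z. GF j (F (fst z)) (snd z (Inl (j, r)))) \<in> borel_measurable (PiM J1 M' \<Otimes>\<^sub>M PiM J2 M')"
        using measurable_compose[OF measurable_Pair[OF a b] GFm] by simp
      note a[measurable] c[measurable]
      show ?thesis by measurable
    qed
    interpret p: pair_sigma_finite "distr M (PiM J1 M') R1" "distr M (PiM J2 M') R2"
      unfolding pair_sigma_finite_def
      using prob_space_distr[OF rv1] prob_space_distr[OF rv2] by (auto intro: prob_space_imp_sigma_finite)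
    have "AE z in distr M (PiM J1 M') R1 \<Otimes>\<^sub>M distr M (PiM J2 M') R2.
        norm (GF j (F (fst z)) (snd z (Inl (j, r))) - gi j (F (fst z))) \<le> \<sigma>"
    proof (rule p.AE_pair_measure)
      show "{z \<in> space (distr M (PiM J1 M') R1 \<Otimes>\<^sub>M distr M (PiM J2 M') R2).
          norm (GF j (F (fst z)) (snd z (Inl (j, r))) - gi j (F (fst z))) \<le> \<sigma>}
          \<in> sets (distr M (PiM J1 M') R1 \<Otimes>\<^sub>M distr M (PiM J2 M') R2)"
        using Pm by (simp add: space_pair_measure cong: sets_pair_measure_cong)
      show "AE x in distr M (PiM J1 M') R1. AE y in distr M (PiM J2 M') R2.
          norm (GF j (F (fst (x, y))) (snd (x, y) (Inl (j, r))) - gi j (F (fst (x, y)))) \<le> \<sigma>"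
      proof (rule AE_I2)
        fix f assume "f \<in> space (distr M (PiM J1 M') R1)"
        have "AE s in D j. norm (GF j (F f) s - gi j (F f)) \<le> \<sigma>" by (rule noise[OF j])
        then have "AE s in distr M (D j) (\<xi>t j r). norm (GF j (F f) s - gi j (F f)) \<le> \<sigma>"
          by (subst distr_t[OF j]) (rule noise[OF j])
        moreover have mS: "{s \<in> space (D j). norm (GF j (F f) s - gi j (F f)) \<le> \<sigma>} \<in> sets (D j)"
        proof -
          note GFm1[of "F f", measurable]
          show ?thesis by measurable
        qed
        ultimately have "AE \<omega> in M. norm (GF j (F f) (\<xi>t j r \<omega>) - gi j (F f)) \<le> \<sigma>"
          using AE_distr_iff[OF rvY mS] by blast
        then have "AE \<omega> in M. norm (GF j (F f) (R2 \<omega> (Inl (j, r))) - gi j (F f)) \<le> \<sigma>"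
          by (simp add: e2)
        moreover have mS2: "{g \<in> space (PiM J2 M'). norm (GF j (F f) (g (Inl (j, r))) - gi j (F f)) \<le> \<sigma>}
            \<in> sets (PiM J2 M')"
        proof -
          have "(\<lambda>g. GF j (F f) (g (Inl (j, r)))) \<in> borel_measurable (PiM J2 M')"
            using measurable_compose[OF Gm GFm1[of "F f"]] by (simp add: o_def)
          note this[measurable]
          show ?thesis by measurable
        qed
        ultimately have "AE y in distr M (PiM J2 M') R2.
            norm (GF j (F f) (y (Inl (j, r))) - gi j (F f)) \<le> \<sigma>"
          using AE_distr_iff[OF rv2 mS2] by blast
        then show "AE y in distr M (PiM J2 M') R2.
          norm (GF j (F (fst (f, y))) (snd (f, y) (Inl (j, r))) - gi j (F (fst (f, y)))) \<le> \<sigma>"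
          by simp
      qed
    qed
    then have "AE z in distr M (PiM J1 M' \<Otimes>\<^sub>M PiM J2 M') (\<lambda>x. (R1 x, R2 x)).
        norm (GF j (F (fst z)) (snd z (Inl (j, r))) - gi j (F (fst z))) \<le> \<sigma>"
      by (subst eq[symmetric])
    then have "AE \<omega> in M. norm (GF j (F (R1 \<omega>)) (R2 \<omega> (Inl (j, r))) - gi j (F (R1 \<omega>))) \<le> \<sigma>"
      using AE_distr_iff[OF measurable_Pair[OF rv1 rv2] Pm] by simp
    then show ?thesis by (simp add: e1 e2)
  qed
  have "AE \<omega> in M. \<forall>j\<in>{..<N}. norm (GF j (X \<omega>) (\<xi>t j r \<omega>) - gi j (X \<omega>)) \<le> \<sigma>"
    by (rule AE_finite_allI) (auto intro: noise_j)
  then show "AE \<omega> in M. \<forall>x. norm (x - xbar N I \<eta> \<gamma> GF x0 (\<lambda>i r. \<xi>t i r \<omega>) (\<lambda>i t. \<xi> i t \<omega>) r)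
          \<le> 2 * \<eta> * real I * (2 * \<sigma> + \<gamma> / \<eta>) \<longrightarrow>
        indicator (event_A M N I \<eta> \<gamma> GF x0 \<xi>t \<xi> r) \<omega> * onorm (Hi i x)
          \<le> L0 + L1 * (\<kappa> + (\<rho> + 1) * (\<gamma> / \<eta> + 2 * \<sigma>))"
  proof (rule AE_mp, intro AE_I2 impI allI)
    fix \<omega> x
    assume nz: "\<forall>j\<in>{..<N}. norm (GF j (X \<omega>) (\<xi>t j r \<omega>) - gi j (X \<omega>)) \<le> \<sigma>"
    assume dx: "norm (x - xbar N I \<eta> \<gamma> GF x0 (\<lambda>i r. \<xi>t i r \<omega>) (\<lambda>i t. \<xi> i t \<omega>) r)
          \<le> 2 * \<eta> * real I * (2 * \<sigma> + \<gamma> / \<eta>)"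
    then have dx: "norm (x - X \<omega>) \<le> 2 * \<eta> * real I * (2 * \<sigma> + \<gamma> / \<eta>)" by (simp add: X_def)
    define R where "R = L0 + L1 * (\<kappa> + (\<rho> + 1) * (\<gamma> / \<eta> + 2 * \<sigma>))"
    have R0: "0 \<le> R" unfolding R_def using L0 L1 kappa rho eta gamma sigma
      by (intro add_nonneg_nonneg mult_nonneg_nonneg) auto
    show "indicator (event_A M N I \<eta> \<gamma> GF x0 \<xi>t \<xi> r) \<omega> * onorm (Hi i x) \<le> R"
    proof (cases "\<omega> \<in> event_A M N I \<eta> \<gamma> GF x0 \<xi>t \<xi> r")
      case False then show ?thesis using R0 by simp
    next
      case True
      then have GA: "norm (Gavg N GF (\<lambda>i r. \<xi>t i r \<omega>) r (X \<omega>)) \<le> \<gamma> / \<eta>"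
        by (simp add: event_A_def X_def)
      have Nr: "real N > 0" using N by simp
      have eqv: "(1 / real N) *\<^sub>R (\<Sum>j<N. gi j (X \<omega>)) = Gavg N GF (\<lambda>i r. \<xi>t i r \<omega>) r (X \<omega>)
          - (1 / real N) *\<^sub>R (\<Sum>j<N. GF j (X \<omega>) (\<xi>t j r \<omega>) - gi j (X \<omega>))"
        unfolding Gavg_def by (simp add: sum_subtractf algebra_simps)
      have "norm ((1 / real N) *\<^sub>R (\<Sum>j<N. gi j (X \<omega>))) \<le>
          norm (Gavg N GF (\<lambda>i r. \<xi>t i r \<omega>) r (X \<omega>))
          + norm ((1 / real N) *\<^sub>R (\<Sum>j<N. GF j (X \<omega>) (\<xi>t j r \<omega>) - gi j (X \<omega>)))"
        unfolding eqv by (rule norm_triangle_ineq4)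
      also have "norm ((1 / real N) *\<^sub>R (\<Sum>j<N. GF j (X \<omega>) (\<xi>t j r \<omega>) - gi j (X \<omega>))) \<le> \<sigma>"
      proof -
        have "norm (\<Sum>j<N. GF j (X \<omega>) (\<xi>t j r \<omega>) - gi j (X \<omega>)) \<le> (\<Sum>j<N. \<sigma>)"
          using nz by (intro order_trans[OF norm_sum] sum_mono) auto
        then show ?thesis using Nr by (simp add: divide_simps mult.commute)
      qed
      finally have gf: "norm ((1 / real N) *\<^sub>R (\<Sum>j<N. gi j (X \<omega>))) \<le> \<gamma> / \<eta> + \<sigma>"
        using GA by linarith
      define G0 where "G0 = \<kappa> + \<rho> * (\<gamma> / \<eta> + \<sigma>)"
      have g0: "norm (gi i (X \<omega>)) \<le> G0"
        using hetero[OF i, of "X \<omega>"] gf rho unfolding G0_def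
        by (meson add_left_mono mult_left_mono order_trans zero_le_one order_trans[of 0 1 \<rho>])
      have G0nn: "G0 \<ge> 0" unfolding G0_def using kappa rho eta gamma sigma by simp
      define B where "B = (exp C - 1) / C"
      have B0: "B \<ge> 0" unfolding B_def using C by simp
      define Dd where "Dd = 2 * \<eta> * real I * (2 * \<sigma> + \<gamma> / \<eta>)"
      have DdC: "L1 * Dd \<le> C" using cond2 L1 unfolding Dd_def by (simp add: field_simps)
      have dd: "L1 * norm (x - X \<omega>) \<le> C"
        using dx DdC L1 unfolding Dd_def by (meson mult_left_mono less_imp_le order_trans)
      have growth: "norm (gi i x) \<le> norm (gi i (X \<omega>)) + (L0 + L1 * norm (gi i (X \<omega>))) * norm (x - X \<omega>) * B"
        unfolding B_def
        by (rule grad_growth[OF hess[OF i] smooth[OF i] L0 L1 _ dd]) (use C in simp)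
      also have "\<dots> \<le> G0 + (L0 + L1 * G0) * Dd * B"
        using g0 dx L0 L1 B0 G0nn unfolding Dd_def
        by (intro add_mono mult_right_mono mult_mono) auto
      finally have gx: "norm (gi i x) \<le> G0 + (L0 + L1 * G0) * Dd * B" .
      have AB: "B \<le> 1 + exp C - B" unfolding B_def by (rule AgeB[OF C])
      have c1: "2 * \<eta> * real I * (B * (L0 + L1 * G0)) \<le> 1"
      proof -
        have "B * L0 \<le> (1 + exp C - B) * L0" using AB L0 by (rule mult_right_mono)
        then have "2 * \<eta> * real I * (B * (L0 + L1 * G0)) \<le>
            2 * \<eta> * real I * ((1 + exp C - B) * L0 + B * L1 * \<kappa> + B * L1 * \<rho> * (\<sigma> + \<gamma> / \<eta>))"
          using eta by (intro mult_left_mono) (auto simp: G0_def algebra_simps)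
        then show ?thesis using cond1 unfolding B_def by linarith
      qed
      have "(L0 + L1 * G0) * Dd * B = (2 * \<eta> * real I * (B * (L0 + L1 * G0))) * (2 * \<sigma> + \<gamma> / \<eta>)"
        unfolding Dd_def by (simp add: algebra_simps)
      also have "\<dots> \<le> 1 * (2 * \<sigma> + \<gamma> / \<eta>)"
        using c1 sigma eta gamma by (intro mult_right_mono) auto
      finally have inc: "(L0 + L1 * G0) * Dd * B \<le> 2 * \<sigma> + \<gamma> / \<eta>" by simp
      have "norm (gi i x) \<le> \<kappa> + (\<rho> + 1) * (\<gamma> / \<eta> + 2 * \<sigma>)"
      proof -
        have h1: "0 \<le> \<rho> * \<sigma>" using rho sigma by simp
        have h2: "\<rho> * (2 * \<sigma>) = 2 * (\<rho> * \<sigma>)" by simp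
        have h3: "(\<rho> + 1) * (\<gamma> / \<eta> + 2 * \<sigma>) = \<rho> * (\<gamma> / \<eta>) + \<rho> * (2 * \<sigma>) + \<gamma> / \<eta> + 2 * \<sigma>"
          by (simp add: distrib_left distrib_right add_divide_distrib)
        have h4: "G0 = \<kappa> + \<rho> * (\<gamma> / \<eta>) + \<rho> * \<sigma>" unfolding G0_def by (simp add: distrib_left)
        show ?thesis using gx inc h1 h2 h3 h4 by linarith
      qed
      then have "onorm (Hi i x) \<le> R"
        using smooth[OF i, of x] L1 unfolding R_def
        by (meson add_left_mono mult_left_mono less_imp_le order_trans)
      then show ?thesis using True by simp
    qed
  qed
qed

end
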